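(* Let $B$ be a proper $\mathbb{C}(z)$-submodule of $\mathbb{C}(z)\otimes\mathbb{C}^r$ and $B^*=B\cap(\mathbb{C}[z]\otimes\mathbb{C}^r)$. A vectorial $pg$-sequence $u_{\omega,h}$ is orthogonal to $B$ if and only if it is orthogonal to $B^*$.
   Context: $\mathbb{C}(z)$ is the Laurent polynomial ring in $z_1,\dots,z_d$ and $\mathbb{C}[z]$ the polynomial ring. A vectorial $pg$-sequence is $u_{\omega,h}:\mathbb{Z}^d\to\mathbb{C}^r$, $k\mapsto\omega^kh(k)$, with $\omega\in(\mathbb{C}\setminus\{0\})^d$, $\omega^k=\prod_i\omega_i^{k_i}$, $h\in\mathbb{C}[z]\otimes\mathbb{C}^r$. For $p=\sum_ka_kz^k\in\mathbb{C}(z)\otimes\mathbb{C}^r$ and $u:\mathbb{Z}^d\to\mathbb{C}^r$, $\langle p,u\rangle=\sum_ka_k\cdot u(k)$; $u$ is orthogonal to a set $S$ if $\langle p,u\rangle=0$ for all $p\in S$. *)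

theory Defs
  imports Complex_Main "HOL-Library.Function_Algebras"
begin

text \<open>An element of C(z) (x) C^r is a finitely
supported coefficient function p : Z^d -> C^r, representing sum_k p(k) z^k.\<close>

definition laurent_vec :: "(('d \<Rightarrow> int) \<Rightarrow> ('r \<Rightarrow> complex)) \<Rightarrow> bool" where
  "laurent_vec p \<longleftrightarrow> finite {k. p k \<noteq> 0}"

definition laurent_poly :: "(('d \<Rightarrow> int) \<Rightarrow> complex) \<Rightarrow> bool" where
  "laurent_poly c \<longleftrightarrow> finite {k. c k \<noteq> 0}"

definition lmult :: "(('d \<Rightarrow> int) \<Rightarrow> complex) \<Rightarrow> (('d \<Rightarrow> int) \<Rightarrow> ('r \<Rightarrow> complex))
    \<Rightarrow> (('d \<Rightarrow> int) \<Rightarrow> ('r \<Rightarrow> complex))" where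
  "lmult c p = (\<lambda>k i. \<Sum>j\<in>{j. c j \<noteq> 0}. c j * p (k - j) i)"

definition laurent_submodule :: "(('d \<Rightarrow> int) \<Rightarrow> ('r \<Rightarrow> complex)) set \<Rightarrow> bool" where
  "laurent_submodule B \<longleftrightarrow>
     B \<subseteq> {p. laurent_vec p} \<and> 0 \<in> B \<and>
     (\<forall>p\<in>B. \<forall>q\<in>B. p + q \<in> B) \<and>
     (\<forall>c p. laurent_poly c \<longrightarrow> p \<in> B \<longrightarrow> lmult c p \<in> B)"

definition poly_vec :: "(('d \<Rightarrow> int) \<Rightarrow> ('r \<Rightarrow> complex)) \<Rightarrow> bool" where
  "poly_vec p \<longleftrightarrow> laurent_vec p \<and> (\<forall>k. p k \<noteq> 0 \<longrightarrow> (\<forall>i. 0 \<le> k i))"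

definition pairing :: "(('d \<Rightarrow> int) \<Rightarrow> ('r::finite \<Rightarrow> complex)) \<Rightarrow> (('d \<Rightarrow> int) \<Rightarrow> ('r \<Rightarrow> complex)) \<Rightarrow> complex" where
  "pairing p u = (\<Sum>k\<in>{k. p k \<noteq> 0}. \<Sum>i\<in>UNIV. p k i * u k i)"

definition orthogonal_to :: "(('d \<Rightarrow> int) \<Rightarrow> ('r::finite \<Rightarrow> complex)) set \<Rightarrow> (('d \<Rightarrow> int) \<Rightarrow> ('r \<Rightarrow> complex)) \<Rightarrow> bool" where
  "orthogonal_to S u \<longleftrightarrow> (\<forall>p\<in>S. pairing p u = 0)"

definition poly_vec_eval :: "(('d::finite \<Rightarrow> int) \<Rightarrow> ('r \<Rightarrow> complex)) \<Rightarrow> ('d \<Rightarrow> int) \<Rightarrow> ('r \<Rightarrow> complex)" where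
  "poly_vec_eval h k = (\<lambda>i. \<Sum>m\<in>{m. h m \<noteq> 0}. h m i * (\<Prod>j\<in>UNIV. of_int (k j) ^ nat (m j)))"

definition pg_seq :: "('d::finite \<Rightarrow> complex) \<Rightarrow> (('d \<Rightarrow> int) \<Rightarrow> ('r \<Rightarrow> complex)) \<Rightarrow> ('d \<Rightarrow> int) \<Rightarrow> ('r \<Rightarrow> complex)" where
  "pg_seq \<omega> h = (\<lambda>k i. (\<Prod>j\<in>UNIV. \<omega> j powi k j) * poly_vec_eval h k i)"

end

theory Submission
  imports Defs "HOL-Computational_Algebra.Polynomial"
begin

inductive polyfun :: "(('d \<Rightarrow> int) \<Rightarrow> complex) \<Rightarrow> bool" where
  pf_const: "polyfun (\<lambda>_. c)"
| pf_coord: "polyfun (\<lambda>j. of_int (j l))"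
| pf_add: "polyfun f \<Longrightarrow> polyfun g \<Longrightarrow> polyfun (\<lambda>j. f j + g j)"
| pf_mult: "polyfun f \<Longrightarrow> polyfun g \<Longrightarrow> polyfun (\<lambda>j. f j * g j)"

lemma polyfun_sum: "(\<And>x. x \<in> A \<Longrightarrow> polyfun (f x)) \<Longrightarrow> polyfun (\<lambda>j. \<Sum>x\<in>A. f x j)"
proof (induction A rule: infinite_finite_induct)
  case (infinite A) then show ?case by (simp add: pf_const)
next
  case empty then show ?case by (simp add: pf_const)
next
  case (insert x F) then show ?case by (simp add: pf_add)
qed

lemma polyfun_prod: "(\<And>x. x \<in> A \<Longrightarrow> polyfun (f x)) \<Longrightarrow> polyfun (\<lambda>j. \<Prod>x\<in>A. f x j)"
proof (induction A rule: infinite_finite_induct)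
  case (infinite A) then show ?case by (simp add: pf_const)
next
  case empty then show ?case by (simp add: pf_const)
next
  case (insert x F) then show ?case by (simp add: pf_mult)
qed

lemma polyfun_power: "polyfun f \<Longrightarrow> polyfun (\<lambda>j. f j ^ n)"
  by (induction n) (auto intro: pf_const pf_mult)

lemma polyfun_univ: "polyfun f \<Longrightarrow> \<exists>q. \<forall>t. f (j(i:=t)) = poly q (of_int t)"
proof (induction rule: polyfun.induct)
  case (pf_const c) then show ?case by (rule exI[of _ "[:c:]"]) simp
next
  case (pf_coord l)
  show ?case
  proof (cases "l = i")
    case True then show ?thesis by (intro exI[of _ "[:0,1:]"]) simp
  next
    case False then show ?thesis by (intro exI[of _ "[:of_int (j l):]"]) simp
  qed
next
  case (pf_add f g)
  then obtain q1 q2 where "\<forall>t. f (j(i:=t)) = poly q1 (of_int t)" "\<forall>t. g (j(i:=t)) = poly q2 (of_int t)" by blast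
  then have "\<forall>t. f (j(i:=t)) + g (j(i:=t)) = poly (q1 + q2) (of_int t)" by (metis poly_add)
  then show ?case by blast
next
  case (pf_mult f g)
  then obtain q1 q2 where "\<forall>t. f (j(i:=t)) = poly q1 (of_int t)" "\<forall>t. g (j(i:=t)) = poly q2 (of_int t)" by blast
  then have "\<forall>t. f (j(i:=t)) * g (j(i:=t)) = poly (q1 * q2) (of_int t)" by (metis poly_mult)
  then show ?case by blast
qed

lemma polyfun_vanish_aux:
  fixes f :: "('d \<Rightarrow> int) \<Rightarrow> complex"
  assumes pf: "polyfun f" and z: "\<And>j. (\<forall>i. M i \<le> j i) \<Longrightarrow> f j = 0"
  and S: "finite S"
  shows "\<forall>j. (\<forall>i. i \<notin> S \<longrightarrow> M i \<le> j i) \<longrightarrow> f j = 0"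
  using S
proof (induction S rule: finite_induct)
  case empty then show ?case using z by auto
next
  case (insert i S)
  show ?case
  proof (intro allI impI)
    fix j :: "'d \<Rightarrow> int"
    assume jH: "\<forall>i'. i' \<notin> insert i S \<longrightarrow> M i' \<le> j i'"
    obtain q where q: "\<forall>t. f (j(i:=t)) = poly q (of_int t)" using polyfun_univ[OF pf] by blast
    have roots: "of_int ` {M i..} \<subseteq> {x. poly q x = 0}"
    proof
      fix x assume "x \<in> (of_int ` {M i..} :: complex set)"
      then obtain t where t: "t \<ge> M i" "x = of_int t" by auto
      have "f (j(i:=t)) = 0" using insert.IH jH t(1) by auto
      then show "x \<in> {x. poly q x = 0}" using q t by auto
    qed
    have "infinite (of_int ` {M i..} :: complex set)"
    proof
      assume "finite (of_int ` {M i..} :: complex set)"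
      moreover have "inj_on (of_int :: int \<Rightarrow> complex) {M i..}" by (auto simp: inj_on_def)
      ultimately have "finite {M i..}" using finite_imageD by blast
      then show False using infinite_Ici by blast
    qed
    then have "q = 0" using roots poly_roots_finite finite_subset by blast
    then show "f j = 0" using q by (metis fun_upd_triv poly_0)
  qed
qed

lemma polyfun_vanish:
  fixes f :: "('d::finite \<Rightarrow> int) \<Rightarrow> complex"
  assumes "polyfun f" and "\<And>j. (\<forall>i. M i \<le> j i) \<Longrightarrow> f j = 0"
  shows "f j = 0"
  using polyfun_vanish_aux[OF assms finite_UNIV] by simp

theorem lemma4p8:
  fixes B :: "(('d::finite \<Rightarrow> int) \<Rightarrow> ('r::finite \<Rightarrow> complex)) set"
    and \<omega> :: "'d \<Rightarrow> complex"
    and h :: "('d \<Rightarrow> int) \<Rightarrow> ('r \<Rightarrow> complex)"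
  assumes "laurent_submodule B"
    and "B \<noteq> {p. laurent_vec p}"
    and "\<forall>j. \<omega> j \<noteq> 0"
    and "poly_vec h"
  shows "orthogonal_to B (pg_seq \<omega> h) \<longleftrightarrow> orthogonal_to (B \<inter> {p. poly_vec p}) (pg_seq \<omega> h)"
proof
  assume "orthogonal_to B (pg_seq \<omega> h)"
  then show "orthogonal_to (B \<inter> {p. poly_vec p}) (pg_seq \<omega> h)" unfolding orthogonal_to_def by blast
next
  assume R: "orthogonal_to (B \<inter> {p. poly_vec p}) (pg_seq \<omega> h)"
  have sub: "B \<subseteq> {p. laurent_vec p}" and 
    mul: "\<And>c p. laurent_poly c \<Longrightarrow> p \<in> B \<Longrightarrow> lmult c p \<in> B"
    using assms(1) unfolding laurent_submodule_def by auto
  show "orthogonal_to B (pg_seq \<omega> h)"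
    unfolding orthogonal_to_def
  proof
    fix p assume pB: "p \<in> B"
    define K where "K = {k. p k \<noteq> 0}"
    have finK: "finite K" using sub pB unfolding K_def laurent_vec_def by auto
    define W :: "('d \<Rightarrow> int) \<Rightarrow> complex" where "W k = (\<Prod>j\<in>UNIV. \<omega> j powi k j)" for k
    define hev where "hev = poly_vec_eval h"
    define G where "G m = (\<Sum>k\<in>K. \<Sum>i\<in>UNIV. p k i * W k * hev (k + m) i)" for m
    define M :: "'d \<Rightarrow> int" where "M i = (\<Sum>k\<in>K. \<bar>k i\<bar>)" for i
    have u_eq: "pg_seq \<omega> h k i = W k * hev k i" for k i
      unfolding pg_seq_def W_def hev_def by simp
    have Wadd: "W (k + m) = W k * W m" for k m
      unfolding W_def using assms(3) by (simp add: power_int_add prod.distrib)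
    have Wnz: "W m \<noteq> 0" for m
      unfolding W_def using assms(3) by simp
    have pf_hev: "polyfun (\<lambda>m. hev (k + m) i)" for k i
    proof -
      have c: "polyfun (\<lambda>m. of_int ((k + m) j) ^ nat (mm j))" for j mm
      proof -
        have "polyfun (\<lambda>m. (\<lambda>m. of_int (k j)) m + (\<lambda>m. of_int (m j)) m)"
          by (rule pf_add[OF pf_const pf_coord])
        then have "polyfun (\<lambda>m. of_int ((k + m) j) :: complex)" by simp
        then show ?thesis by (rule polyfun_power)
      qed
      have "polyfun (\<lambda>m. \<Sum>mm\<in>{mm. h mm \<noteq> 0}. h mm i * (\<Prod>j\<in>UNIV. of_int ((k + m) j) ^ nat (mm j)))"
        by (intro polyfun_sum pf_mult[OF pf_const] polyfun_prod c)
      then show ?thesis unfolding hev_def poly_vec_eval_def by simp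
    qed
    have pfG: "polyfun G"
      unfolding G_def
      by (intro polyfun_sum pf_mult[OF pf_const] pf_hev)
    have Gz: "G m = 0" if mM: "\<forall>i. M i \<le> m i" for m
    proof -
      define c :: "('d \<Rightarrow> int) \<Rightarrow> complex" where "c j = (if j = m then 1 else 0)" for j
      have cs: "{j. c j \<noteq> 0} = {m}" unfolding c_def by auto
      have lpc: "laurent_poly c" unfolding laurent_poly_def cs by simp
      define q where "q = (\<lambda>k. p (k - m))"
      have lq: "lmult c p = q" unfolding lmult_def cs q_def c_def by (auto intro!: ext)
      have qB: "q \<in> B" using mul[OF lpc pB] lq by simp
      have qset: "{k. q k \<noteq> 0} = (\<lambda>k. k + m) ` K"
      proof
        show "{k. q k \<noteq> 0} \<subseteq> (\<lambda>k. k + m) ` K"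
        proof
          fix k assume "k \<in> {k. q k \<noteq> 0}"
          then have "k - m \<in> K" unfolding q_def K_def by simp
          moreover have "k = (k - m) + m" by simp
          ultimately show "k \<in> (\<lambda>k. k + m) ` K" by blast
        qed
      next
        show "(\<lambda>k. k + m) ` K \<subseteq> {k. q k \<noteq> 0}" unfolding q_def K_def by auto
      qed
      have qpoly: "poly_vec q"
        unfolding poly_vec_def laurent_vec_def
      proof (intro conjI allI impI)
        show "finite {k. q k \<noteq> 0}" unfolding qset using finK by simp
      next
        fix k i assume "q k \<noteq> 0"
        then have kK: "k - m \<in> K" unfolding q_def K_def by simp
        have "\<bar>(k - m) i\<bar> \<le> M i" unfolding M_def
          by (rule member_le_sum[OF kK _ finK]) simp
        moreover have "M i \<le> m i" using mM by blast
        ultimately show "0 \<le> k i" by simp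
      qed
      have "pairing q (pg_seq \<omega> h) = 0" using R qB qpoly unfolding orthogonal_to_def by blast
      moreover have "pairing q (pg_seq \<omega> h) = W m * G m"
      proof -
        have "pairing q (pg_seq \<omega> h) = (\<Sum>k\<in>(\<lambda>k. k + m) ` K. \<Sum>i\<in>UNIV. q k i * pg_seq \<omega> h k i)"
          unfolding pairing_def qset ..
        also have "\<dots> = (\<Sum>k\<in>K. \<Sum>i\<in>UNIV. q (k + m) i * pg_seq \<omega> h (k + m) i)"
          by (subst sum.reindex) (auto simp: inj_on_def)
        also have "\<dots> = (\<Sum>k\<in>K. \<Sum>i\<in>UNIV. W m * (p k i * W k * hev (k + m) i))"
          unfolding q_def u_eq Wadd by (simp add: algebra_simps)
        also have "\<dots> = W m * G m"
          unfolding G_def by (simp add: sum_distrib_left)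
        finally show ?thesis .
      qed
      ultimately show ?thesis using Wnz by simp
    qed
    have "G 0 = 0" using polyfun_vanish[OF pfG] Gz by blast
    moreover have "G 0 = pairing p (pg_seq \<omega> h)"
      unfolding G_def pairing_def K_def u_eq by (simp add: algebra_simps)
    ultimately show "pairing p (pg_seq \<omega> h) = 0" by simp
  qed
qed

end
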